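(* Suppose the weights satisfy the discrete Pearson equations $\theta(k+1)w^{(a)}(k+1)=\sigma^{(a)}(k)w^{(a)}(k)$, $k\in\mathbb N_0$, $a\in\{1,2\}$, with $\theta,\sigma^{(1)},\sigma^{(2)}$ polynomials and $\theta(0)=0$. Then \[ \Pi^{-1}\theta(T)=\sigma^{(1)}\big({T^{(1)}}^\top\big){\Pi^{(1)}}^\top+\sigma^{(2)}\big({T^{(2)}}^\top\big){\Pi^{(2)}}^\top. \]
   Context: Let $w^{(1)},w^{(2)}:\mathbb N_0\to\mathbb C$ be weights, $X(x)=(1,x,x^2,\dots)^\top$, $X^{(1)}(x)=(1,0,x,0,\dots)^\top$, $X^{(2)}(x)=(0,1,0,x,\dots)^\top$, and $\mathscr M=\sum_k X(k)(w^{(1)}(k)X^{(1)}(k)+w^{(2)}(k)X^{(2)}(k))^\top$ the moment matrix (series absolutely convergent). Assume all leading principal minors of $\mathscr M$ are nonzero, so $\mathscr M=S^{-1}H\tilde S^{-\top}$ with $S,\tilde S$ lower unitriangular and $H$ diagonal. $\Lambda$ is the matrix with ones on the first superdiagonal, $I^{(1)}=\operatorname{diag}(1,0,1,0,\dots)$, $I^{(2)}=\operatorname{diag}(0,1,0,1,\dots)$, $\Lambda^{(a)}=\Lambda^2I^{(a)}$. $T=S\Lambda S^{-1}$ and $T^{(a)}=H^{-1}\tilde S\Lambda^{(a)}\tilde S^{-1}H$. $L$ is the Pascal matrix $L_{n,m}=\binom nm$ ($n\ge m$), $\Pi=SLS^{-1}$, $\Pi^{-1}=SL^{-1}S^{-1}$;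 $L^{(a)}$ has only nonzero entries $L^{(a)}_{2n+a-1,2m+a-1}=\binom nm$ ($n\ge m$), and $\Pi^{(a)}=H^{-1}\tilde SL^{(a)}\tilde S^{-1}H$. *)

theory Defs
  imports "HOL-Analysis.Infinite_Sum" "HOL-Computational_Algebra.Polynomial"
          "Jordan_Normal_Form.Determinant"
begin

type_synonym imat = "nat \<Rightarrow> nat \<Rightarrow> complex"

text \<open>Matrix product as the (unconditional) series over the inner index; in all
  products occurring below the series has finite support.\<close>
definition im_mult :: "imat \<Rightarrow> imat \<Rightarrow> imat" (infixl "\<star>" 70) where
  "im_mult A B = (\<lambda>i j. infsum (\<lambda>k. A i k * B k j) UNIV)"

definition im_id :: imat where
  "im_id = (\<lambda>i j. if i = j then 1 else 0)"

definition im_diag :: "(nat \<Rightarrow> complex) \<Rightarrow> imat" where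
  "im_diag d = (\<lambda>i j. if i = j then d i else 0)"

definition im_transpose :: "imat \<Rightarrow> imat" where
  "im_transpose A = (\<lambda>i j. A j i)"

definition im_add :: "imat \<Rightarrow> imat \<Rightarrow> imat" where
  "im_add A B = (\<lambda>i j. A i j + B i j)"

definition im_smult :: "complex \<Rightarrow> imat \<Rightarrow> imat" where
  "im_smult c A = (\<lambda>i j. c * A i j)"

primrec im_pow :: "imat \<Rightarrow> nat \<Rightarrow> imat" where
  "im_pow A 0 = im_id"
| "im_pow A (Suc n) = A \<star> im_pow A n"

definition im_poly :: "complex poly \<Rightarrow> imat \<Rightarrow> imat" where
  "im_poly p A = (\<lambda>i j. \<Sum>n\<le>degree p. coeff p n * im_pow A n i j)"

definition lower_unitri :: "imat \<Rightarrow> bool" where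
  "lower_unitri A \<longleftrightarrow> (\<forall>i j. i < j \<longrightarrow> A i j = 0) \<and> (\<forall>i. A i i = 1)"

definition lower_tri :: "imat \<Rightarrow> bool" where
  "lower_tri A \<longleftrightarrow> (\<forall>i j. i < j \<longrightarrow> A i j = 0)"

definition im_linv :: "imat \<Rightarrow> imat" where
  "im_linv A = (THE B. lower_tri B \<and> A \<star> B = im_id \<and> B \<star> A = im_id)"

definition Xvec :: "complex \<Rightarrow> nat \<Rightarrow> complex" where
  "Xvec x n = x ^ n"

definition Xvec1 :: "complex \<Rightarrow> nat \<Rightarrow> complex" where
  "Xvec1 x n = (if even n then x ^ (n div 2) else 0)"

definition Xvec2 :: "complex \<Rightarrow> nat \<Rightarrow> complex" where
  "Xvec2 x n = (if odd n then x ^ (n div 2) else 0)"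

definition moment :: "(nat \<Rightarrow> complex) \<Rightarrow> (nat \<Rightarrow> complex) \<Rightarrow> imat" where
  "moment w1 w2 = (\<lambda>n m. \<Sum>k. Xvec (of_nat k) n *
       (w1 k * Xvec1 (of_nat k) m + w2 k * Xvec2 (of_nat k) m))"

definition lead_minor :: "imat \<Rightarrow> nat \<Rightarrow> complex" where
  "lead_minor A N = det (mat (Suc N) (Suc N) (\<lambda>(i, j). A i j))"

definition Lambda :: imat where
  "Lambda = (\<lambda>i j. if j = Suc i then 1 else 0)"

definition Ipar :: "nat \<Rightarrow> imat" where
  "Ipar a = im_diag (\<lambda>i. if i mod 2 = a - 1 then 1 else 0)"

definition Lambda_par :: "nat \<Rightarrow> imat" where
  "Lambda_par a = im_pow Lambda 2 \<star> Ipar a"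

definition Pascal :: imat where
  "Pascal = (\<lambda>n m. of_nat (n choose m))"

definition Pascal_par :: "nat \<Rightarrow> imat" where
  "Pascal_par a = (\<lambda>i j. if i mod 2 = a - 1 \<and> j mod 2 = a - 1
                          then of_nat ((i div 2) choose (j div 2)) else 0)"

definition Tmat :: "imat \<Rightarrow> imat" where
  "Tmat S = S \<star> Lambda \<star> im_linv S"

definition Tpar :: "(nat \<Rightarrow> complex) \<Rightarrow> imat \<Rightarrow> nat \<Rightarrow> imat" where
  "Tpar h St a = im_diag (\<lambda>i. 1 / h i) \<star> St \<star> Lambda_par a \<star> im_linv St \<star> im_diag h"

definition PiMat :: "imat \<Rightarrow> imat" where
  "PiMat S = S \<star> Pascal \<star> im_linv S"

definition PiInv :: "imat \<Rightarrow> imat" where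
  "PiInv S = S \<star> im_linv Pascal \<star> im_linv S"

definition PiPar :: "(nat \<Rightarrow> complex) \<Rightarrow> imat \<Rightarrow> nat \<Rightarrow> imat" where
  "PiPar h St a = im_diag (\<lambda>i. 1 / h i) \<star> St \<star> Pascal_par a \<star> im_linv St \<star> im_diag h"

end

theory Submission
  imports Defs
begin

definition rowfin :: "imat \<Rightarrow> bool" where
  "rowfin A \<longleftrightarrow> (\<forall>i. \<exists>b. \<forall>k>b. A i k = 0)"

definition colfin :: "imat \<Rightarrow> bool" where
  "colfin A \<longleftrightarrow> (\<forall>j. \<exists>b. \<forall>k>b. A k j = 0)"

lemma infsum_bound:
  fixes f :: "nat \<Rightarrow> complex"
  assumes "\<And>k. b < k \<Longrightarrow> f k = 0"
  shows "infsum f UNIV = (\<Sum>k\<le>b. f k)"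
proof -
  have "infsum f UNIV = infsum f {..b}"
    by (rule infsum_cong_neutral) (auto simp: assms not_le)
  thus ?thesis by simp
qed

lemma sum_delta1: fixes b :: nat shows "(\<Sum>k\<le>b. (if a = k then c else 0) * f k) = (if a \<le> b then c * f a else (0::complex))"
  by (induction b) (auto simp: le_Suc_eq)

lemma sum_delta2: fixes b :: nat shows "(\<Sum>k\<le>b. f k * (if k = a then c else 0)) = (if a \<le> b then f a * c else (0::complex))"
  by (induction b) (auto simp: le_Suc_eq)

lemma mult_bound_row:
  assumes "\<And>k. b < k \<Longrightarrow> A i k = 0"
  shows "(A \<star> B) i j = (\<Sum>k\<le>b. A i k * B k j)"
  unfolding im_mult_def by (rule infsum_bound) (simp add: assms)

lemma mult_bound_col:
  assumes "\<And>k. b < k \<Longrightarrow> B k j = 0"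
  shows "(A \<star> B) i j = (\<Sum>k\<le>b. A i k * B k j)"
  unfolding im_mult_def by (rule infsum_bound) (simp add: assms)

lemma rowfinD: "rowfin A \<Longrightarrow> \<exists>b. \<forall>k>b. A i k = 0"
  unfolding rowfin_def by blast

lemma colfinD: "colfin A \<Longrightarrow> \<exists>b. \<forall>k>b. A k j = 0"
  unfolding colfin_def by blast

lemma rowfin_uniform:
  fixes b :: nat
  assumes "rowfin B"
  shows "\<exists>c. \<forall>k\<le>b. \<forall>l>c. B k l = 0"
proof (induction b)
  case 0
  then show ?case using rowfinD[OF assms, of 0] by auto
next
  case (Suc b)
  then obtain c where c: "\<forall>k\<le>b. \<forall>l>c. B k l = 0" by blast
  obtain c' where c': "\<forall>l>c'. B (Suc b) l = 0" using rowfinD[OF assms] by blast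
  show ?case
    by (rule exI[of _ "max c c'"]) (use c c' in \<open>auto simp: le_Suc_eq\<close>)
qed

lemma family_uniform:
  fixes d :: nat and M :: "nat \<Rightarrow> imat"
  assumes "\<And>n. n \<le> d \<Longrightarrow> rowfin (M n)"
  shows "\<exists>c. \<forall>n\<le>d. \<forall>l>c. M n i l = 0"
  using assms
proof (induction d)
  case 0
  then obtain c where "\<forall>l>c. M 0 i l = 0" using rowfinD by blast
  then show ?case by auto
next
  case (Suc d)
  have "\<exists>c. \<forall>n\<le>d. \<forall>l>c. M n i l = 0" using Suc.IH Suc.prems by simp
  then obtain c where c: "\<forall>n\<le>d. \<forall>l>c. M n i l = 0" by blast
  obtain c' where c': "\<forall>l>c'. M (Suc d) i l = 0" using rowfinD[OF Suc.prems[of "Suc d"]] by blast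
  show ?case
    by (rule exI[of _ "max c c'"]) (use c c' in \<open>auto simp: le_Suc_eq\<close>)
qed

lemma rowfin_mult: assumes "rowfin A" "rowfin B" shows "rowfin (A \<star> B)"
  unfolding rowfin_def
proof
  fix i
  obtain b where b: "\<And>k. b < k \<Longrightarrow> A i k = 0" using rowfinD[OF assms(1)] by blast
  obtain c where c: "\<forall>k\<le>b. \<forall>l>c. B k l = 0" using rowfin_uniform[OF assms(2)] by blast
  show "\<exists>c. \<forall>l>c. (A \<star> B) i l = 0"
    by (rule exI[of _ c]) (use c in \<open>auto simp: mult_bound_row[of b A i, OF b]\<close>)
qed

lemma assoc_rr:
  assumes "rowfin A" "rowfin B"
  shows "(A \<star> B) \<star> C = A \<star> (B \<star> C)"
proof (intro ext)
  fix i j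
  obtain b where b: "\<And>k. b < k \<Longrightarrow> A i k = 0" using rowfinD[OF assms(1)] by blast
  obtain c where c: "\<forall>k\<le>b. \<forall>l>c. B k l = 0" using rowfin_uniform[OF assms(2)] by blast
  have ab0: "\<And>l. c < l \<Longrightarrow> (A \<star> B) i l = 0" using c by (auto simp: mult_bound_row[of b A i, OF b])
  have "((A \<star> B) \<star> C) i j = (\<Sum>l\<le>c. (A \<star> B) i l * C l j)" by (rule mult_bound_row[of c "A \<star> B" i, OF ab0])
  also have "\<dots> = (\<Sum>l\<le>c. (\<Sum>k\<le>b. A i k * B k l) * C l j)" by (simp add: mult_bound_row[of b A i, OF b])
  also have "\<dots> = (\<Sum>k\<le>b. A i k * (\<Sum>l\<le>c. B k l * C l j))"
    by (simp add: sum_distrib_left sum_distrib_right mult.assoc sum.swap[of _ "{..c}"])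
  also have "\<dots> = (\<Sum>k\<le>b. A i k * (B \<star> C) k j)"
  proof (rule sum.cong[OF refl])
    fix k assume "k \<in> {..b}"
    hence "\<And>l. c < l \<Longrightarrow> B k l = 0" using c by auto
    thus "A i k * (\<Sum>l\<le>c. B k l * C l j) = A i k * (B \<star> C) k j"
      by (simp add: mult_bound_row[of c B k])
  qed
  also have "\<dots> = (A \<star> (B \<star> C)) i j" by (simp add: mult_bound_row[of b A i, OF b])
  finally show "((A \<star> B) \<star> C) i j = (A \<star> (B \<star> C)) i j" .
qed

lemma assoc_rc:
  assumes "rowfin A" "colfin C"
  shows "(A \<star> B) \<star> C = A \<star> (B \<star> C)"
proof (intro ext)
  fix i j
  obtain b where b: "\<And>k. b < k \<Longrightarrow> A i k = 0" using rowfinD[OF assms(1)] by blast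
  obtain c where c: "\<And>l. c < l \<Longrightarrow> C l j = 0" using colfinD[OF assms(2)] by blast
  have "((A \<star> B) \<star> C) i j = (\<Sum>l\<le>c. (A \<star> B) i l * C l j)" by (rule mult_bound_col[of c C j, OF c])
  also have "\<dots> = (\<Sum>l\<le>c. (\<Sum>k\<le>b. A i k * B k l) * C l j)" by (simp add: mult_bound_row[of b A i, OF b])
  also have "\<dots> = (\<Sum>k\<le>b. A i k * (\<Sum>l\<le>c. B k l * C l j))"
    by (simp add: sum_distrib_left sum_distrib_right mult.assoc sum.swap[of _ "{..c}"])
  also have "\<dots> = (A \<star> (B \<star> C)) i j" by (simp add: mult_bound_row[of b A i, OF b] mult_bound_col[of c C j, OF c])
  finally show "((A \<star> B) \<star> C) i j = (A \<star> (B \<star> C)) i j" .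
qed

lemma transpose_mult: "im_transpose (A \<star> B) = im_transpose B \<star> im_transpose A"
  unfolding im_transpose_def im_mult_def by (simp add: mult.commute)

lemma transpose_transpose[simp]: "im_transpose (im_transpose A) = A"
  unfolding im_transpose_def by simp

lemma colfin_transpose[simp]: "colfin (im_transpose A) = rowfin A"
  unfolding colfin_def rowfin_def im_transpose_def by simp

lemma id_mult[simp]: "im_id \<star> A = A"
proof (intro ext)
  fix i j
  have "(im_id \<star> A) i j = (\<Sum>k\<le>i. im_id i k * A k j)" by (rule mult_bound_row) (simp add: im_id_def)
  thus "(im_id \<star> A) i j = A i j" by (simp add: im_id_def sum_delta1)
qed

lemma mult_id[simp]: "A \<star> im_id = A"
proof (intro ext)
  fix i j
  have "(A \<star> im_id) i j = (\<Sum>k\<le>j. A i k * im_id k j)" by (rule mult_bound_col) (simp add: im_id_def)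
  thus "(A \<star> im_id) i j = A i j" by (simp add: im_id_def sum_delta2)
qed

lemma diag_mult: "(im_diag d \<star> A) = (\<lambda>i j. d i * A i j)"
proof (intro ext)
  fix i j
  have "(im_diag d \<star> A) i j = (\<Sum>k\<le>i. im_diag d i k * A k j)" by (rule mult_bound_row) (simp add: im_diag_def)
  thus "(im_diag d \<star> A) i j = d i * A i j" by (simp add: im_diag_def sum_delta1)
qed

lemma diag_diag: "im_diag d \<star> im_diag e = im_diag (\<lambda>i. d i * e i)"
  by (simp add: diag_mult) (auto simp: im_diag_def fun_eq_iff)

lemma transpose_id[simp]: "im_transpose im_id = im_id"
  unfolding im_transpose_def im_id_def by (auto simp: fun_eq_iff)

lemma transpose_diag[simp]: "im_transpose (im_diag d) = im_diag d"
  unfolding im_transpose_def im_diag_def by (auto simp: fun_eq_iff)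

lemma rowfin_id[simp]: "rowfin im_id"
  unfolding rowfin_def im_id_def by (intro allI, rule_tac x=i in exI) auto

lemma rowfin_diag[simp]: "rowfin (im_diag d)"
  unfolding rowfin_def im_diag_def by (intro allI, rule_tac x=i in exI) auto

lemma lower_tri_rowfin: "lower_tri A \<Longrightarrow> rowfin A"
  unfolding rowfin_def lower_tri_def by blast

lemma rowfin_Lambda[simp]: "rowfin Lambda"
  unfolding rowfin_def Lambda_def by (intro allI, rule_tac x="Suc i" in exI) auto

lemma rowfin_pow[simp]: "rowfin A \<Longrightarrow> rowfin (im_pow A n)"
  by (induction n) (auto intro: rowfin_mult)

lemma rowfin_add[simp]: assumes "rowfin A" "rowfin B" shows "rowfin (im_add A B)"
  unfolding rowfin_def
proof
  fix i
  obtain b where b: "\<forall>k>b. A i k = 0" using rowfinD[OF assms(1)] by blast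
  obtain c where c: "\<forall>k>c. B i k = 0" using rowfinD[OF assms(2)] by blast
  show "\<exists>b. \<forall>k>b. im_add A B i k = 0"
    by (rule exI[of _ "max b c"]) (simp add: im_add_def b c)
qed

lemma rowfin_poly[simp]: assumes "rowfin A" shows "rowfin (im_poly p A)"
  unfolding rowfin_def
proof
  fix i
  obtain c where c: "\<forall>n\<le>degree p. \<forall>l>c. im_pow A n i l = 0"
    using family_uniform[of "degree p" "im_pow A" i] assms by auto
  show "\<exists>b. \<forall>k>b. im_poly p A i k = 0"
    by (rule exI[of _ c]) (simp add: im_poly_def c)
qed

lemma mult_sum_left:
  fixes d :: nat
  assumes "rowfin A"
  shows "A \<star> (\<lambda>i j. \<Sum>n\<le>d. c n * M n i j) = (\<lambda>i j. \<Sum>n\<le>d. c n * (A \<star> M n) i j)"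
proof (intro ext)
  fix i j
  obtain b where b: "\<And>k. b < k \<Longrightarrow> A i k = 0" using rowfinD[OF assms(1)] by blast
  show "(A \<star> (\<lambda>i j. \<Sum>n\<le>d. c n * M n i j)) i j = (\<Sum>n\<le>d. c n * (A \<star> M n) i j)"
    by (simp add: mult_bound_row[of b A i, OF b] sum_distrib_left sum.swap[of _ "{..b}"] mult_ac)
qed

lemma mult_sum_right:
  fixes d :: nat
  assumes "\<And>n. n \<le> d \<Longrightarrow> rowfin (M n)"
  shows "(\<lambda>i j. \<Sum>n\<le>d. c n * M n i j) \<star> B = (\<lambda>i j. \<Sum>n\<le>d. c n * (M n \<star> B) i j)"
proof (intro ext)
  fix i j
  obtain b where b: "\<forall>n\<le>d. \<forall>l>b. M n i l = 0" using family_uniform[of d M i, OF assms] by blast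
  have b0: "\<And>k. b < k \<Longrightarrow> (\<Sum>n\<le>d. c n * M n i k) = 0" using b by simp
  have "((\<lambda>i j. \<Sum>n\<le>d. c n * M n i j) \<star> B) i j = (\<Sum>k\<le>b. (\<Sum>n\<le>d. c n * M n i k) * B k j)"
    by (rule mult_bound_row) (use b0 in simp)
  also have "\<dots> = (\<Sum>n\<le>d. c n * (\<Sum>k\<le>b. M n i k * B k j))"
    by (simp add: sum_distrib_left sum_distrib_right sum.swap[of _ "{..b}"] mult_ac)
  also have "\<dots> = (\<Sum>n\<le>d. c n * (M n \<star> B) i j)"
    by (rule sum.cong[OF refl]) (subst mult_bound_row[of b], use b in auto)
  finally show "((\<lambda>i j. \<Sum>n\<le>d. c n * M n i j) \<star> B) i j = (\<Sum>n\<le>d. c n * (M n \<star> B) i j)" .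
qed

lemma add_mult: assumes "rowfin A" "rowfin B"
  shows "im_add A B \<star> C = im_add (A \<star> C) (B \<star> C)"
proof (intro ext)
  fix i j
  obtain b where b: "\<forall>k>b. A i k = 0" using rowfinD[OF assms(1)] by blast
  obtain c where c: "\<forall>k>c. B i k = 0" using rowfinD[OF assms(2)] by blast
  have 1: "\<And>k. max b c < k \<Longrightarrow> A i k = 0" "\<And>k. max b c < k \<Longrightarrow> B i k = 0"
     "\<And>k. max b c < k \<Longrightarrow> im_add A B i k = 0" using b c by (auto simp: im_add_def)
  show "(im_add A B \<star> C) i j = im_add (A \<star> C) (B \<star> C) i j"
    using mult_bound_row[of "max b c" "im_add A B" i, OF 1(3)] mult_bound_row[of "max b c" A i, OF 1(1)] mult_bound_row[of "max b c" B i, OF 1(2)]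
    unfolding im_add_def by (simp add: distrib_right sum.distrib)
qed

lemma mult_add: assumes "rowfin A"
  shows "A \<star> im_add B C = im_add (A \<star> B) (A \<star> C)"
proof (intro ext)
  fix i j
  obtain b where b: "\<And>k. b < k \<Longrightarrow> A i k = 0" using rowfinD[OF assms(1)] by blast
  show "(A \<star> im_add B C) i j = im_add (A \<star> B) (A \<star> C) i j"
    by (simp add: mult_bound_row[of b A i, OF b] im_add_def distrib_left sum.distrib)
qed

lemma transpose_add: "im_transpose (im_add A B) = im_add (im_transpose A) (im_transpose B)"
  unfolding im_transpose_def im_add_def by simp

lemma pow_commute: "rowfin A \<Longrightarrow> A \<star> im_pow A n = im_pow A n \<star> A"
proof (induction n)
  case 0 then show ?case by simp
next
  case (Suc n)
  have "im_pow A (Suc n) \<star> A = A \<star> (im_pow A n \<star> A)" using Suc.prems by (simp add: assoc_rr)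
  also have "\<dots> = A \<star> im_pow A (Suc n)" using Suc by simp
  finally show ?case by simp
qed

lemma transpose_pow: "rowfin A \<Longrightarrow> im_transpose (im_pow A n) = im_pow (im_transpose A) n"
proof (induction n)
  case 0 then show ?case by simp
next
  case (Suc n)
  have "im_transpose (im_pow A (Suc n)) = im_transpose (im_pow A n \<star> A)"
    using pow_commute[OF Suc.prems] by simp
  also have "\<dots> = im_transpose A \<star> im_pow (im_transpose A) n"
    using Suc by (simp add: transpose_mult)
  finally show ?case by simp
qed

lemma transpose_poly: "rowfin A \<Longrightarrow> im_transpose (im_poly p A) = im_poly p (im_transpose A)"
  unfolding im_poly_def using transpose_pow[of A]
  by (simp add: im_transpose_def fun_eq_iff)

lemma conj_pow:
  assumes "rowfin U" "rowfin Ui" "rowfin A" "U \<star> Ui = im_id" "Ui \<star> U = im_id"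
  shows "im_pow (U \<star> A \<star> Ui) n = U \<star> im_pow A n \<star> Ui"
proof (induction n)
  case 0 then show ?case using assms by simp
next
  case (Suc n)
  have c: "Ui \<star> (U \<star> X) = X" for X using assoc_rr[of Ui U X] assms by simp
  have "im_pow (U \<star> A \<star> Ui) (Suc n) = (U \<star> A \<star> Ui) \<star> (U \<star> im_pow A n \<star> Ui)"
    using Suc by simp
  also have "\<dots> = U \<star> (A \<star> (Ui \<star> (U \<star> (im_pow A n \<star> Ui))))"
    using assms by (simp add: assoc_rr rowfin_mult)
  also have "\<dots> = U \<star> im_pow A (Suc n) \<star> Ui"
    using assms by (simp add: assoc_rr rowfin_mult c)
  finally show ?case .
qed

lemma conj_poly:
  assumes "rowfin U" "rowfin Ui" "rowfin A" "U \<star> Ui = im_id" "Ui \<star> U = im_id"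
  shows "im_poly p (U \<star> A \<star> Ui) = U \<star> im_poly p A \<star> Ui"
proof -
  have "U \<star> im_poly p A \<star> Ui = (\<lambda>i j. \<Sum>n\<le>degree p. coeff p n * (U \<star> im_pow A n) i j) \<star> Ui"
    unfolding im_poly_def by (simp add: mult_sum_left assms)
  also have "\<dots> = (\<lambda>i j. \<Sum>n\<le>degree p. coeff p n * (U \<star> im_pow A n \<star> Ui) i j)"
    by (rule mult_sum_right) (simp add: assms rowfin_mult)
  also have "\<dots> = im_poly p (U \<star> A \<star> Ui)"
    unfolding im_poly_def by (simp add: conj_pow assms)
  finally show ?thesis by simp
qed


section \<open>Inverses of lower unitriangular matrices\<close>

function binv :: "imat \<Rightarrow> nat \<Rightarrow> nat \<Rightarrow> complex" where
  "binv A i j = (if i < j then 0 else if i = j then 1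
                 else - (\<Sum>k\<in>{j..<i}. A i k * binv A k j))"
  by auto
termination by (relation "measure (\<lambda>(A,i,j). i)") auto

declare binv.simps[simp del]

lemma binv_unitri: "lower_unitri (binv A)"
  unfolding lower_unitri_def by (auto simp: binv.simps)

lemma lower_unitri_rowfin: "lower_unitri A \<Longrightarrow> rowfin A"
  unfolding lower_unitri_def rowfin_def by blast

lemma split_sum_at:
  fixes f :: "nat \<Rightarrow> complex"
  assumes "j \<le> i"
  shows "(\<Sum>k\<le>i. f k) = f i + (\<Sum>k<j. f k) + (\<Sum>k\<in>{j..<i}. f k)"
proof -
  have "(\<Sum>k\<le>i. f k) = (\<Sum>k<i. f k) + f i"
    by (simp add: lessThan_Suc_atMost[symmetric])
  moreover have "(\<Sum>k<i. f k) = (\<Sum>k<j. f k) + (\<Sum>k\<in>{j..<i}. f k)"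
    using sum.atLeastLessThan_concat[of 0 j i f] assms by (simp add: lessThan_atLeast0)
  ultimately show ?thesis by simp
qed

lemma binv_right:
  assumes S: "lower_unitri S"
  shows "S \<star> binv S = im_id"
proof (intro ext)
  fix i j
  have b: "\<And>k. i < k \<Longrightarrow> S i k = 0" using S unfolding lower_unitri_def by blast
  have e: "(S \<star> binv S) i j = (\<Sum>k\<le>i. S i k * binv S k j)" by (rule mult_bound_row[of i S i, OF b])
  have Sii: "S i i = 1" using S unfolding lower_unitri_def by blast
  show "(S \<star> binv S) i j = im_id i j"
  proof (cases "i < j")
    case True
    then show ?thesis unfolding e by (auto simp: im_id_def binv.simps intro!: sum.neutral)
  next
    case False
    hence ji: "j \<le> i" by simp
    have z: "(\<Sum>k<j. S i k * binv S k j) = 0" by (auto simp: binv.simps intro!: sum.neutral)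
    show ?thesis
    proof (cases "i = j")
      case True
      then show ?thesis unfolding e split_sum_at[OF ji] using z Sii by (simp add: im_id_def binv.simps)
    next
      case False
      hence "j < i" using ji by simp
      hence "binv S i j = - (\<Sum>k\<in>{j..<i}. S i k * binv S k j)"
        by (subst binv.simps) simp
      then show ?thesis unfolding e split_sum_at[OF ji] using z Sii False by (simp add: im_id_def)
    qed
  qed
qed

lemma linv_props:
  assumes S: "lower_unitri S"
  shows "lower_unitri (im_linv S)" "S \<star> im_linv S = im_id" "im_linv S \<star> S = im_id"
proof -
  define B where "B = binv S"
  have SB: "S \<star> B = im_id" using binv_right[OF S] B_def by simp
  have BB: "B \<star> binv B = im_id" using binv_right[OF binv_unitri] B_def by simp
  have rS: "rowfin S" and rB: "rowfin B"
    using S binv_unitri B_def lower_unitri_rowfin by auto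
  have "S = S \<star> (B \<star> binv B)" using BB by simp
  also have "\<dots> = binv B" using assoc_rr[OF rS rB, of "binv B"] SB by simp
  finally have BS: "B \<star> S = im_id" using BB by simp
  have lt: "lower_tri B" using binv_unitri B_def unfolding lower_unitri_def lower_tri_def by simp
  have eq: "im_linv S = B"
    unfolding im_linv_def
  proof (rule the_equality)
    show "lower_tri B \<and> S \<star> B = im_id \<and> B \<star> S = im_id" using lt SB BS by simp
  next
    fix C assume C: "lower_tri C \<and> S \<star> C = im_id \<and> C \<star> S = im_id"
    have rC: "rowfin C" using C lower_tri_rowfin by blast
    have "C = C \<star> (S \<star> B)" using SB by simp
    also have "\<dots> = (C \<star> S) \<star> B" using assoc_rr[OF rC rS] by simp
    also have "\<dots> = B" using C by simp
    finally show "C = B" .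
  qed
  show "lower_unitri (im_linv S)" using eq B_def binv_unitri by simp
  show "S \<star> im_linv S = im_id" using eq SB by simp
  show "im_linv S \<star> S = im_id" using eq BS by simp
qed

lemma Pascal_unitri: "lower_unitri Pascal"
  unfolding lower_unitri_def Pascal_def by auto

section \<open>Matrix-vector products\<close>

definition mv :: "imat \<Rightarrow> (nat \<Rightarrow> complex) \<Rightarrow> nat \<Rightarrow> complex" where
  "mv A v = (\<lambda>i. infsum (\<lambda>k. A i k * v k) UNIV)"

lemma mv_col: "X \<star> (\<lambda>i j. v i) = (\<lambda>i j. mv X v i)"
  by (simp add: im_mult_def mv_def)

lemma mv_mult:
  assumes "rowfin A" "rowfin B"
  shows "mv (A \<star> B) v = mv A (mv B v)"
proof -
  have "(A \<star> B) \<star> (\<lambda>i j. v i) = A \<star> (B \<star> (\<lambda>i j. v i))" by (rule assoc_rr[OF assms])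
  hence H: "(\<lambda>i (j::nat). mv (A \<star> B) v i) = (\<lambda>i j. mv A (mv B v) i)" by (simp only: mv_col)
  show ?thesis
  proof
    fix i show "mv (A \<star> B) v i = mv A (mv B v) i" by (rule fun_cong[where x=0, OF fun_cong[where x=i, OF H]])
  qed
qed

lemma mv_bound:
  assumes "\<And>k. b < k \<Longrightarrow> A i k = 0"
  shows "mv A v i = (\<Sum>k\<le>b. A i k * v k)"
  unfolding mv_def by (rule infsum_bound) (simp add: assms)

lemma mv_id[simp]: "mv im_id v = v"
proof
  fix i
  show "mv im_id v i = v i" by (subst mv_bound[of i]) (auto simp: im_id_def sum_delta1)
qed

lemma mv_diag: "mv (im_diag d) v = (\<lambda>i. d i * v i)"
proof
  fix i
  show "mv (im_diag d) v i = d i * v i" by (subst mv_bound[of i]) (auto simp: im_diag_def sum_delta1)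
qed

lemma mv_Lambda: "mv Lambda v = (\<lambda>i. v (Suc i))"
proof
  fix i
  show "mv Lambda v i = v (Suc i)"
    by (subst mv_bound[of "Suc i"]) (auto simp: Lambda_def sum_delta2[where f="\<lambda>_. 1", simplified] 
        if_distrib cong: if_cong)
qed

lemma mv_add:
  assumes "rowfin A" "rowfin B"
  shows "mv (im_add A B) v = (\<lambda>i. mv A v i + mv B v i)"
proof
  fix i
  obtain b where b: "\<forall>k>b. A i k = 0" using rowfinD[OF assms(1)] by blast
  obtain c where c: "\<forall>k>c. B i k = 0" using rowfinD[OF assms(2)] by blast
  have 1: "\<And>k. max b c < k \<Longrightarrow> A i k = 0" "\<And>k. max b c < k \<Longrightarrow> B i k = 0"
     "\<And>k. max b c < k \<Longrightarrow> im_add A B i k = 0" using b c by (auto simp: im_add_def)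
  show "mv (im_add A B) v i = mv A v i + mv B v i"
    using mv_bound[of "max b c" "im_add A B" i, OF 1(3)] mv_bound[of "max b c" A i, OF 1(1)]
      mv_bound[of "max b c" B i, OF 1(2)]
    unfolding im_add_def by (simp add: distrib_right sum.distrib)
qed

lemma mv_lin:
  assumes "rowfin A"
  shows "mv A (\<lambda>k. a * u k + b * w k) = (\<lambda>i. a * mv A u i + b * mv A w i)"
proof
  fix i
  obtain c where c: "\<And>k. c < k \<Longrightarrow> A i k = 0" using rowfinD[OF assms(1)] by blast
  show "mv A (\<lambda>k. a * u k + b * w k) i = a * mv A u i + b * mv A w i"
    by (simp add: mv_bound[of c A i, OF c] distrib_left sum.distrib sum_distrib_left mult_ac)
qed

lemma mv_scale:
  assumes "rowfin A"
  shows "mv A (\<lambda>k. a * u k) = (\<lambda>i. a * mv A u i)"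
  using mv_lin[OF assms, of a u 0 u] by simp

lemma mv_sum:
  fixes d :: nat
  assumes "\<And>n. n \<le> d \<Longrightarrow> rowfin (M n)"
  shows "mv (\<lambda>i j. \<Sum>n\<le>d. c n * M n i j) v = (\<lambda>i. \<Sum>n\<le>d. c n * mv (M n) v i)"
proof
  fix i
  obtain b where b: "\<forall>n\<le>d. \<forall>l>b. M n i l = 0" using family_uniform[of d M i, OF assms] by blast
  have b0: "\<And>k. b < k \<Longrightarrow> (\<Sum>n\<le>d. c n * M n i k) = 0" using b by simp
  have "mv (\<lambda>i j. \<Sum>n\<le>d. c n * M n i j) v i = (\<Sum>k\<le>b. (\<Sum>n\<le>d. c n * M n i k) * v k)"
    by (rule mv_bound) (use b0 in simp)
  also have "\<dots> = (\<Sum>n\<le>d. c n * (\<Sum>k\<le>b. M n i k * v k))"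
    by (simp add: sum_distrib_left sum_distrib_right sum.swap[of _ "{..b}"] mult_ac)
  also have "\<dots> = (\<Sum>n\<le>d. c n * mv (M n) v i)"
    by (rule sum.cong[OF refl]) (subst mv_bound[of b], use b in auto)
  finally show "mv (\<lambda>i j. \<Sum>n\<le>d. c n * M n i j) v i = (\<Sum>n\<le>d. c n * mv (M n) v i)" .
qed

lemma mv_pow_eig:
  assumes "rowfin A" "mv A v = (\<lambda>i. x * v i)"
  shows "mv (im_pow A n) v = (\<lambda>i. x ^ n * v i)"
proof (induction n)
  case 0 then show ?case by simp
next
  case (Suc n)
  have "mv (im_pow A (Suc n)) v = mv A (mv (im_pow A n) v)" using assms by (simp add: mv_mult)
  also have "\<dots> = (\<lambda>i. x ^ n * mv A v i)" using Suc assms by (simp add: mv_scale)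
  finally show ?case using assms by (simp add: mult_ac)
qed

lemma mv_poly_eig:
  assumes "rowfin A" "mv A v = (\<lambda>i. x * v i)"
  shows "mv (im_poly p A) v = (\<lambda>i. poly p x * v i)"
proof -
  have "mv (im_poly p A) v = (\<lambda>i. \<Sum>n\<le>degree p. coeff p n * mv (im_pow A n) v i)"
    unfolding im_poly_def by (rule mv_sum) (simp add: assms)
  also have "\<dots> = (\<lambda>i. poly p x * v i)"
    by (simp add: mv_pow_eig[OF assms] poly_altdef sum_distrib_left mult_ac)
  finally show ?thesis .
qed


section \<open>Eigenvector computations\<close>

definition Xq :: "nat \<Rightarrow> complex \<Rightarrow> nat \<Rightarrow> complex" where
  "Xq c x = (\<lambda>i. if i mod 2 = c then x ^ (i div 2) else 0)"

lemma Xvec1_Xq: "Xvec1 x = Xq 0 x"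
  by (auto simp: Xvec1_def Xq_def fun_eq_iff even_iff_mod_2_eq_zero)

lemma Xvec2_Xq: "Xvec2 x = Xq 1 x"
  by (auto simp: Xvec2_def Xq_def fun_eq_iff odd_iff_mod_2_eq_one)

lemma Xq_SS: "Xq c x (Suc (Suc i)) = x * Xq c x i"
proof -
  have "Suc (Suc i) = i + 2" by simp
  then show ?thesis by (simp only: Xq_def) simp
qed

lemma mv_Lambda_X: "mv Lambda (Xvec x) = (\<lambda>i. x * Xvec x i)"
  by (simp add: mv_Lambda Xvec_def)

lemma rowfin_Pascal[simp]: "rowfin Pascal"
  by (rule lower_unitri_rowfin[OF Pascal_unitri])

lemma mv_Pascal_X: "mv Pascal (Xvec x) = Xvec (x + 1)"
proof
  fix i
  have "mv Pascal (Xvec x) i = (\<Sum>k\<le>i. of_nat (i choose k) * x ^ k)"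
    by (subst mv_bound[of i]) (auto simp: Pascal_def Xvec_def)
  also have "\<dots> = (x + 1) ^ i" by (simp add: binomial_ring[of x 1 i])
  finally show "mv Pascal (Xvec x) i = Xvec (x + 1) i" by (simp add: Xvec_def)
qed

lemma rowfin_Ipar[simp]: "rowfin (Ipar a)"
  by (simp add: Ipar_def)

lemma rowfin_Lpar[simp]: "rowfin (Lambda_par a)"
  by (simp add: Lambda_par_def rowfin_mult)

lemma mv_Ipar: "mv (Ipar a) (Xq c x) = (\<lambda>i. (if a - 1 = c then 1 else 0) * Xq c x i)"
  by (auto simp: Ipar_def mv_diag Xq_def fun_eq_iff)

lemma mv_Lpar: "mv (Lambda_par a) (Xq c x) = (\<lambda>i. (if a - 1 = c then x else 0) * Xq c x i)"
proof -
  have p2: "im_pow Lambda 2 = Lambda \<star> Lambda" by (simp add: numeral_2_eq_2)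
  have "mv (Lambda_par a) (Xq c x) = mv Lambda (mv Lambda (mv (Ipar a) (Xq c x)))"
    unfolding Lambda_par_def p2 by (simp add: mv_mult rowfin_mult)
  also have "\<dots> = (\<lambda>i. (if a - 1 = c then 1 else 0) * Xq c x (Suc (Suc i)))"
    by (simp add: mv_Lambda mv_Ipar)
  also have "\<dots> = (\<lambda>i. (if a - 1 = c then x else 0) * Xq c x i)"
    by (simp add: Xq_SS)
  finally show ?thesis .
qed

lemma rowfin_Ppar[simp]: "rowfin (Pascal_par a)"
  unfolding rowfin_def
proof
  fix i
  show "\<exists>b. \<forall>k>b. Pascal_par a i k = 0"
  proof (rule exI[of _ "Suc i"], intro allI impI)
    fix k assume "Suc i < k"
    hence "i div 2 < k div 2" by linarith
    thus "Pascal_par a i k = 0" by (simp add: Pascal_par_def)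
  qed
qed

lemma mv_Ppar:
  assumes c: "c < 2"
  shows "mv (Pascal_par a) (Xq c x) = (\<lambda>i. if a - 1 = c then Xq c (x + 1) i else 0)"
proof
  fix i
  show "mv (Pascal_par a) (Xq c x) i = (if a - 1 = c then Xq c (x + 1) i else 0)"
  proof (cases "i mod 2 = a - 1 \<and> a - 1 = c")
    case False
    hence "\<And>k. Pascal_par a i k * Xq c x k = 0"
      by (auto simp: Pascal_par_def Xq_def)
    hence "mv (Pascal_par a) (Xq c x) i = 0" unfolding mv_def by (simp only: infsum_0)
    then show ?thesis using False by (auto simp: Xq_def)
  next
    case True
    define n where "n = i div 2"
    define f where "f = (\<lambda>k. Pascal_par a i k * Xq c x k)"
    define g where "g = (\<lambda>m::nat. 2 * m + c)"
    have fk: "f k = (if k mod 2 = c then of_nat (n choose (k div 2)) * x ^ (k div 2) else 0)" for k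
      using True by (auto simp: f_def Pascal_par_def Xq_def n_def)
    have inj: "inj g" unfolding g_def inj_def by auto
    have "mv (Pascal_par a) (Xq c x) i = infsum f UNIV" by (simp add: mv_def f_def)
    also have "\<dots> = infsum f (range g)"
    proof (rule infsum_cong_neutral)
      fix k assume "k \<in> UNIV - range g"
      hence nk: "k \<notin> range g" by simp
      have "k mod 2 \<noteq> c"
      proof
        assume "k mod 2 = c"
        hence "k = g (k div 2)" unfolding g_def using div_mult_mod_eq[of k 2] by simp
        thus False using nk by auto
      qed
      thus "f k = 0" by (simp add: fk)
    qed auto
    also have "\<dots> = infsum (f \<circ> g) UNIV" by (rule infsum_reindex[OF inj])
    also have "f \<circ> g = (\<lambda>m. of_nat (n choose m) * x ^ m)"
      using c by (auto simp: fk g_def fun_eq_iff)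
    also have "infsum (\<lambda>m. of_nat (n choose m) * x ^ m) UNIV = (\<Sum>m\<le>n. of_nat (n choose m) * x ^ m)"
      by (rule infsum_bound) simp
    also have "\<dots> = (x + 1) ^ n" by (simp add: binomial_ring[of x 1 n])
    finally show ?thesis using True by (simp add: Xq_def n_def)
  qed
qed

lemma mv_PL:
  assumes c: "c < 2"
  shows "mv (Pascal_par a \<star> im_poly s (Lambda_par a)) (Xq c x) =
         (\<lambda>i. if a - 1 = c then poly s x * Xq c (x + 1) i else 0)"
proof -
  have "mv (Pascal_par a \<star> im_poly s (Lambda_par a)) (Xq c x) =
        mv (Pascal_par a) (mv (im_poly s (Lambda_par a)) (Xq c x))"
    by (simp add: mv_mult)
  also have "\<dots> = mv (Pascal_par a) (\<lambda>i. poly s (if a - 1 = c then x else 0) * Xq c x i)"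
    by (subst mv_poly_eig[OF _ mv_Lpar]) simp_all
  also have "\<dots> = (\<lambda>i. if a - 1 = c then poly s x * Xq c (x + 1) i else 0)"
    by (simp add: mv_scale mv_Ppar[OF c])
  finally show ?thesis .
qed


section \<open>Gram-type matrices\<close>

definition gram :: "(nat \<Rightarrow> nat \<Rightarrow> complex) \<Rightarrow> (nat \<Rightarrow> nat \<Rightarrow> complex) \<Rightarrow> imat" where
  "gram f g = (\<lambda>i j. \<Sum>t. f t i * g t j)"

definition gsum :: "(nat \<Rightarrow> nat \<Rightarrow> complex) \<Rightarrow> (nat \<Rightarrow> nat \<Rightarrow> complex) \<Rightarrow> bool" where
  "gsum f g \<longleftrightarrow> (\<forall>i j. summable (\<lambda>t. f t i * g t j))"

lemma gram_left:
  assumes A: "rowfin A" and gs: "gsum f g"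
  shows "A \<star> gram f g = gram (\<lambda>t. mv A (f t)) g" "gsum (\<lambda>t. mv A (f t)) g"
proof -
  have main: "(A \<star> gram f g) i j = gram (\<lambda>t. mv A (f t)) g i j \<and>
      summable (\<lambda>t. mv A (f t) i * g t j)" for i j
  proof -
    obtain b where b: "\<And>k. b < k \<Longrightarrow> A i k = 0" using rowfinD[OF A] by blast
    have s: "\<And>k. summable (\<lambda>t. f t k * g t j)" using gs gsum_def by blast
    have e: "\<And>t. mv A (f t) i * g t j = (\<Sum>k\<le>b. A i k * (f t k * g t j))"
    proof -
      fix t
      have "mv A (f t) i = (\<Sum>k\<le>b. A i k * f t k)" by (rule mv_bound) (simp add: b)
      thus "mv A (f t) i * g t j = (\<Sum>k\<le>b. A i k * (f t k * g t j))"
        by (simp add: sum_distrib_left mult_ac)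
    qed
    have "(A \<star> gram f g) i j = (\<Sum>k\<le>b. A i k * (\<Sum>t. f t k * g t j))"
      by (simp add: mult_bound_row[of b A i, OF b] gram_def)
    also have "\<dots> = (\<Sum>k\<le>b. (\<Sum>t. A i k * (f t k * g t j)))"
      by (simp add: suminf_mult[OF s])
    also have "\<dots> = (\<Sum>t. \<Sum>k\<le>b. A i k * (f t k * g t j))"
      by (rule suminf_sum[symmetric]) (simp add: summable_mult s)
    finally have 1: "(A \<star> gram f g) i j = gram (\<lambda>t. mv A (f t)) g i j"
      by (simp add: gram_def e)
    have 2: "summable (\<lambda>t. mv A (f t) i * g t j)"
      unfolding e by (rule summable_sum) (simp add: summable_mult s)
    show ?thesis using 1 2 by simp
  qed
  show "A \<star> gram f g = gram (\<lambda>t. mv A (f t)) g" using main by (intro ext) blast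
  show "gsum (\<lambda>t. mv A (f t)) g" using main gsum_def by blast
qed

lemma gram_right:
  assumes B: "rowfin B" and gs: "gsum f g"
  shows "gram f g \<star> im_transpose B = gram f (\<lambda>t. mv B (g t))" "gsum f (\<lambda>t. mv B (g t))"
proof -
  have main: "(gram f g \<star> im_transpose B) i j = gram f (\<lambda>t. mv B (g t)) i j \<and>
      summable (\<lambda>t. f t i * mv B (g t) j)" for i j
  proof -
    obtain b where b: "\<And>k. b < k \<Longrightarrow> B j k = 0" using rowfinD[OF B] by blast
    have bt: "\<And>k. b < k \<Longrightarrow> im_transpose B k j = 0" using b by (simp add: im_transpose_def)
    have s: "\<And>k. summable (\<lambda>t. f t i * g t k)" using gs gsum_def by blast
    have e: "\<And>t. f t i * mv B (g t) j = (\<Sum>k\<le>b. B j k * (f t i * g t k))"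
      by (simp add: mv_bound[of b B j, OF b] sum_distrib_left mult_ac)
    have "(gram f g \<star> im_transpose B) i j = (\<Sum>k\<le>b. (\<Sum>t. f t i * g t k) * B j k)"
      using mult_bound_col[of b "im_transpose B" j "gram f g" i, OF bt] by (simp add: gram_def im_transpose_def)
    also have "\<dots> = (\<Sum>k\<le>b. (\<Sum>t. B j k * (f t i * g t k)))"
      by (simp add: suminf_mult[OF s] mult.commute)
    also have "\<dots> = (\<Sum>t. \<Sum>k\<le>b. B j k * (f t i * g t k))"
      by (rule suminf_sum[symmetric]) (simp add: summable_mult s)
    finally have 1: "(gram f g \<star> im_transpose B) i j = gram f (\<lambda>t. mv B (g t)) i j"
      by (simp add: gram_def e)
    have 2: "summable (\<lambda>t. f t i * mv B (g t) j)"
      unfolding e by (rule summable_sum) (simp add: summable_mult s)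
    show ?thesis using 1 2 by simp
  qed
  show "gram f g \<star> im_transpose B = gram f (\<lambda>t. mv B (g t))" using main by (intro ext) blast
  show "gsum f (\<lambda>t. mv B (g t))" using main gsum_def by blast
qed

definition Rmat :: "complex poly \<Rightarrow> complex poly \<Rightarrow> imat" where
  "Rmat s1 s2 = im_add (Pascal_par 1 \<star> im_poly s1 (Lambda_par 1))
                       (Pascal_par 2 \<star> im_poly s2 (Lambda_par 2))"

lemma rowfin_Rmat[simp]: "rowfin (Rmat s1 s2)"
  by (simp add: Rmat_def rowfin_mult)

lemma mv_Rmat0: "mv (Rmat s1 s2) (Xq 0 x) = (\<lambda>i. poly s1 x * Xq 0 (x + 1) i)"
  by (simp add: Rmat_def mv_add rowfin_mult mv_PL)

lemma mv_Rmat1: "mv (Rmat s1 s2) (Xq 1 x) = (\<lambda>i. poly s2 x * Xq 1 (x + 1) i)"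
  by (simp add: Rmat_def mv_add rowfin_mult mv_PL)

lemma core:
  fixes w1 w2 :: "nat \<Rightarrow> complex" and \<theta> \<sigma>1 \<sigma>2 :: "complex poly"
  assumes conv1: "\<And>n m. summable (\<lambda>k. norm (Xvec (of_nat k) n * w1 k * Xvec1 (of_nat k) m))"
      and conv2: "\<And>n m. summable (\<lambda>k. norm (Xvec (of_nat k) n * w2 k * Xvec2 (of_nat k) m))"
      and pearson1: "\<And>k. poly \<theta> (of_nat (Suc k)) * w1 (Suc k) = poly \<sigma>1 (of_nat k) * w1 k"
      and pearson2: "\<And>k. poly \<theta> (of_nat (Suc k)) * w2 (Suc k) = poly \<sigma>2 (of_nat k) * w2 k"
      and theta0: "poly \<theta> 0 = 0"
  shows "im_poly \<theta> Lambda \<star> moment w1 w2 =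
         Pascal \<star> (moment w1 w2 \<star> im_transpose (Rmat \<sigma>1 \<sigma>2))"
proof -
  define X where "X = (\<lambda>t. Xvec (of_nat t))"
  define g where "g = (\<lambda>t j. w1 t * Xq 0 (of_nat t) j + w2 t * Xq 1 (of_nat t) j)"
  define g2 where "g2 = (\<lambda>t j. w1 t * (poly \<sigma>1 (of_nat t) * Xq 0 (of_nat (Suc t)) j)
                             + w2 t * (poly \<sigma>2 (of_nat t) * Xq 1 (of_nat (Suc t)) j))"
  have N: "moment w1 w2 = gram X g"
    by (simp add: moment_def gram_def X_def g_def Xvec1_Xq Xvec2_Xq)
  have gs: "gsum X g"
    unfolding gsum_def
  proof (intro allI)
    fix i j
    have "summable (\<lambda>t. Xvec (of_nat t) i * w1 t * Xvec1 (of_nat t) j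
                      + Xvec (of_nat t) i * w2 t * Xvec2 (of_nat t) j)"
      by (rule summable_add[OF summable_norm_cancel[OF conv1[of i j]] summable_norm_cancel[OF conv2[of i j]]])
    moreover have "(\<lambda>t. X t i * g t j) = (\<lambda>t. Xvec (of_nat t) i * w1 t * Xvec1 (of_nat t) j
                      + Xvec (of_nat t) i * w2 t * Xvec2 (of_nat t) j)"
      unfolding X_def g_def Xvec1_Xq Xvec2_Xq by (simp only: distrib_left mult.assoc)
    ultimately show "summable (\<lambda>t. X t i * g t j)" by simp
  qed
  have rT: "rowfin (im_poly \<theta> Lambda)" by simp
  have eigT: "\<And>t. mv (im_poly \<theta> Lambda) (X t) = (\<lambda>i. poly \<theta> (of_nat t) * X t i)"
    unfolding X_def by (rule mv_poly_eig[OF rowfin_Lambda mv_Lambda_X])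
  have L: "im_poly \<theta> Lambda \<star> moment w1 w2 = gram (\<lambda>t i. poly \<theta> (of_nat t) * X t i) g"
    and gL: "gsum (\<lambda>t i. poly \<theta> (of_nat t) * X t i) g"
    using gram_left[OF rT gs] eigT unfolding N by simp_all
  have mvg: "\<And>t. mv (Rmat \<sigma>1 \<sigma>2) (g t) = g2 t"
    unfolding g_def g2_def mv_lin[OF rowfin_Rmat] mv_Rmat0 mv_Rmat1 by (simp add: add.commute)
  have R: "moment w1 w2 \<star> im_transpose (Rmat \<sigma>1 \<sigma>2) = gram X g2" and gR: "gsum X g2"
    using gram_right[OF rowfin_Rmat gs, of \<sigma>1 \<sigma>2] mvg unfolding N by simp_all
  have eigP: "\<And>t. mv Pascal (X t) = X (Suc t)"
    by (simp add: X_def mv_Pascal_X add.commute)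
  have P: "Pascal \<star> gram X g2 = gram (\<lambda>t. X (Suc t)) g2"
    using gram_left[OF rowfin_Pascal gR] eigP by simp
  have fin: "gram (\<lambda>t i. poly \<theta> (of_nat t) * X t i) g = gram (\<lambda>t. X (Suc t)) g2"
  proof (intro ext)
    fix i j
    define F where "F = (\<lambda>t. poly \<theta> (of_nat t) * X t i * g t j)"
    have sF: "summable F" using gL unfolding gsum_def F_def by blast
    have F0: "F 0 = 0" by (simp add: F_def theta0)
    have FS: "F (Suc t) = X (Suc t) i * g2 t j" for t
    proof -
      have "F (Suc t) = X (Suc t) i *
          ((poly \<theta> (of_nat (Suc t)) * w1 (Suc t)) * Xq 0 (of_nat (Suc t)) j
         + (poly \<theta> (of_nat (Suc t)) * w2 (Suc t)) * Xq 1 (of_nat (Suc t)) j)"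
        unfolding F_def g_def by (simp only: algebra_simps)
      also have "\<dots> = X (Suc t) i * g2 t j"
        unfolding pearson1 pearson2 g2_def by (simp only: algebra_simps)
      finally show ?thesis .
    qed
    have "gram (\<lambda>t i. poly \<theta> (of_nat t) * X t i) g i j = suminf F"
      by (simp add: gram_def F_def)
    also have "\<dots> = (\<Sum>t. F (Suc t))" using suminf_split_head[OF sF] F0 by simp
    also have "\<dots> = gram (\<lambda>t. X (Suc t)) g2 i j" by (simp add: gram_def FS)
    finally show "gram (\<lambda>t i. poly \<theta> (of_nat t) * X t i) g i j = gram (\<lambda>t. X (Suc t)) g2 i j" .
  qed
  show ?thesis using L R P fin by simp
qed


lemma cancel_left:
  assumes "rowfin Ui" "rowfin U" "Ui \<star> U = im_id"
  shows "Ui \<star> (U \<star> X) = X"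
  using assoc_rr[OF assms(1,2), of X] assms(3) by simp

lemma term_a:
  assumes rU: "rowfin U" and rUi: "rowfin Ui" and UUi: "U \<star> Ui = im_id" and UiU: "Ui \<star> U = im_id"
      and rA: "rowfin A" and rB: "rowfin B"
  shows "im_poly s (im_transpose (U \<star> A \<star> Ui)) \<star> im_transpose (U \<star> B \<star> Ui)
         = im_transpose (U \<star> ((B \<star> im_poly s A) \<star> Ui))"
proof -
  have "im_poly s (im_transpose (U \<star> A \<star> Ui)) = im_transpose (U \<star> im_poly s A \<star> Ui)"
    using transpose_poly[of "U \<star> A \<star> Ui" s] conj_poly[OF rU rUi rA UUi UiU, of s] rU rUi rA
    by (simp add: rowfin_mult)
  hence "im_poly s (im_transpose (U \<star> A \<star> Ui)) \<star> im_transpose (U \<star> B \<star> Ui)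
      = im_transpose ((U \<star> B \<star> Ui) \<star> (U \<star> im_poly s A \<star> Ui))"
    by (simp add: transpose_mult)
  also have "(U \<star> B \<star> Ui) \<star> (U \<star> im_poly s A \<star> Ui) = U \<star> ((B \<star> im_poly s A) \<star> Ui)"
    using rU rUi rA rB UiU by (simp add: assoc_rr rowfin_mult cancel_left)
  finally show ?thesis .
qed

lemma diag_inv: "(\<And>i. h i \<noteq> 0) \<Longrightarrow> im_diag (\<lambda>i. 1 / h i) \<star> im_diag h = im_id"
  "(\<And>i. h i \<noteq> 0) \<Longrightarrow> im_diag h \<star> im_diag (\<lambda>i. 1 / h i) = im_id"
  by (simp_all add: diag_diag) (auto simp: im_diag_def im_id_def fun_eq_iff)

theorem mainTheorem6:
  fixes w1 w2 :: "nat \<Rightarrow> complex" and S St :: imat and h :: "nat \<Rightarrow> complex"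
    and \<theta> \<sigma>1 \<sigma>2 :: "complex poly"
  assumes conv1: "\<And>n m. summable (\<lambda>k. norm (Xvec (of_nat k) n * w1 k * Xvec1 (of_nat k) m))"
      and conv2: "\<And>n m. summable (\<lambda>k. norm (Xvec (of_nat k) n * w2 k * Xvec2 (of_nat k) m))"
      and minors: "\<And>N. lead_minor (moment w1 w2) N \<noteq> 0"
      and S: "lower_unitri S" and St: "lower_unitri St"
      and h: "\<And>i. h i \<noteq> 0"
      and fact: "moment w1 w2 = im_linv S \<star> im_diag h \<star> im_transpose (im_linv St)"
      and pearson1: "\<And>k. poly \<theta> (of_nat (Suc k)) * w1 (Suc k) = poly \<sigma>1 (of_nat k) * w1 k"
      and pearson2: "\<And>k. poly \<theta> (of_nat (Suc k)) * w2 (Suc k) = poly \<sigma>2 (of_nat k) * w2 k"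
      and theta0: "poly \<theta> 0 = 0"
  shows "PiInv S \<star> im_poly \<theta> (Tmat S) =
         im_add (im_poly \<sigma>1 (im_transpose (Tpar h St 1)) \<star> im_transpose (PiPar h St 1))
                (im_poly \<sigma>2 (im_transpose (Tpar h St 2)) \<star> im_transpose (PiPar h St 2))"
proof -
  define Si where "Si = im_linv S"
  define Sti where "Sti = im_linv St"
  define Pi0 where "Pi0 = im_linv Pascal"
  define D where "D = im_diag h"
  define Dv where "Dv = im_diag (\<lambda>i. 1 / h i)"
  define U where "U = Dv \<star> St"
  define Ui where "Ui = Sti \<star> D"
  define Th where "Th = im_poly \<theta> Lambda"
  define R where "R = Rmat \<sigma>1 \<sigma>2"
  define N where "N = moment w1 w2"
  note LS = linv_props[OF S, folded Si_def]
  note LSt = linv_props[OF St, folded Sti_def]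
  note LP = linv_props[OF Pascal_unitri, folded Pi0_def]
  have rS: "rowfin S" and rSi: "rowfin Si" and rSt: "rowfin St" and rSti: "rowfin Sti"
    and rPi: "rowfin Pi0" and rD: "rowfin D" and rDv: "rowfin Dv" and rTh: "rowfin Th"
    and rR: "rowfin R"
    using S St LS(1) LSt(1) LP(1) lower_unitri_rowfin by (auto simp: D_def Dv_def Th_def R_def)
  have rU: "rowfin U" and rUi: "rowfin Ui" using rDv rSt rSti rD by (auto simp: U_def Ui_def rowfin_mult)
  have DvD: "Dv \<star> D = im_id" and DDv: "D \<star> Dv = im_id"
    using diag_inv[of h] h by (auto simp: D_def Dv_def)
  have UUi: "U \<star> Ui = im_id"
    unfolding U_def Ui_def using rDv rSt rSti rD LSt DvD
    by (simp add: assoc_rr rowfin_mult cancel_left)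
  have UiU: "Ui \<star> U = im_id"
    unfolding U_def Ui_def using rDv rSt rSti rD LSt DDv
    by (simp add: assoc_rr rowfin_mult cancel_left)
  define LHS where "LHS = PiInv S \<star> im_poly \<theta> (Tmat S)"
  have LHS_eq: "LHS = S \<star> Pi0 \<star> Si \<star> (S \<star> Th \<star> Si)"
    unfolding LHS_def PiInv_def Tmat_def Si_def[symmetric] Pi0_def[symmetric] Th_def
    using conj_poly[OF rS rSi rowfin_Lambda LS(2) LS(3)] by simp
  have rL: "rowfin LHS" unfolding LHS_eq using rS rSi rPi rTh by (simp add: rowfin_mult)
  define K where "K = im_transpose Ui"
  have SN: "S \<star> N = K"
  proof -
    have "S \<star> N = S \<star> (Si \<star> D \<star> im_transpose Sti)" using fact by (simp add: N_def Si_def Sti_def D_def)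
    also have "\<dots> = (S \<star> (Si \<star> D)) \<star> im_transpose Sti"
      using assoc_rr[OF rS, of "Si \<star> D" "im_transpose Sti"] rSi rD by (simp add: rowfin_mult)
    also have "\<dots> = D \<star> im_transpose Sti" using assoc_rr[OF rS rSi, of D] LS(2) by simp
    also have "\<dots> = K" by (simp add: K_def Ui_def transpose_mult D_def)
    finally show ?thesis .
  qed
  have LSS: "LHS \<star> S = S \<star> (Pi0 \<star> Th)"
    unfolding LHS_eq using rS rSi rPi rTh LS by (simp add: assoc_rr rowfin_mult cancel_left)
  have core': "Th \<star> N = Pascal \<star> (N \<star> im_transpose R)"
    unfolding Th_def N_def R_def by (rule core[OF conv1 conv2 pearson1 pearson2 theta0])
  have LK: "LHS \<star> K = K \<star> im_transpose R"
  proof -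
    have "LHS \<star> K = (LHS \<star> S) \<star> N" using assoc_rr[OF rL rS, of N] SN by simp
    also have "\<dots> = S \<star> (Pi0 \<star> (Th \<star> N))" using LSS rS rPi rTh by (simp add: assoc_rr rowfin_mult)
    also have "\<dots> = S \<star> ((Pi0 \<star> Pascal) \<star> (N \<star> im_transpose R))"
      using core' assoc_rr[OF rPi rowfin_Pascal] by simp
    also have "\<dots> = S \<star> (N \<star> im_transpose R)" using LP by simp
    also have "\<dots> = (S \<star> N) \<star> im_transpose R" using assoc_rc[OF rS, of "im_transpose R" N] rR by simp
    finally show ?thesis using SN by simp
  qed
  have KW: "K \<star> im_transpose U = im_id"
    unfolding K_def using UUi by (simp flip: transpose_mult)
  have LHS_final: "LHS = im_transpose (U \<star> (R \<star> Ui))"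
  proof -
    have "LHS = LHS \<star> (K \<star> im_transpose U)" using KW by simp
    also have "\<dots> = (K \<star> im_transpose R) \<star> im_transpose U"
      using assoc_rc[OF rL, of "im_transpose U" K] rU LK by simp
    also have "\<dots> = im_transpose (U \<star> (R \<star> Ui))" by (simp add: K_def transpose_mult)
    finally show ?thesis .
  qed
  have Tp: "Tpar h St a = U \<star> Lambda_par a \<star> Ui" for a
    unfolding Tpar_def U_def Ui_def Dv_def[symmetric] Sti_def[symmetric] D_def[symmetric]
    using assoc_rr[of "Dv \<star> St \<star> Lambda_par a" Sti D] rDv rSt rSti by (simp add: rowfin_mult)
  have Pp: "PiPar h St a = U \<star> Pascal_par a \<star> Ui" for a
    unfolding PiPar_def U_def Ui_def Dv_def[symmetric] Sti_def[symmetric] D_def[symmetric]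
    using assoc_rr[of "Dv \<star> St \<star> Pascal_par a" Sti D] rDv rSt rSti by (simp add: rowfin_mult)
  have RHS_eq: "im_add (im_poly \<sigma>1 (im_transpose (Tpar h St 1)) \<star> im_transpose (PiPar h St 1))
                (im_poly \<sigma>2 (im_transpose (Tpar h St 2)) \<star> im_transpose (PiPar h St 2))
        = im_add (im_transpose (U \<star> ((Pascal_par 1 \<star> im_poly \<sigma>1 (Lambda_par 1)) \<star> Ui)))
                 (im_transpose (U \<star> ((Pascal_par 2 \<star> im_poly \<sigma>2 (Lambda_par 2)) \<star> Ui)))"
    unfolding Tp Pp by (simp add: term_a[OF rU rUi UUi UiU])
  also have "\<dots> = im_transpose (U \<star> (R \<star> Ui))"
    unfolding transpose_add[symmetric] R_def Rmat_def
    using rU rUi by (simp add: mult_add add_mult rowfin_mult)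
  finally show ?thesis using LHS_final LHS_def by simp
qed

end
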